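(* The map $\Psi=(F,A)\colon \mathcal{T}(\mathrm{OP})\to I^{\mathcal D}\times I^{\mathbb N}$ defined below is a homeomorphism satisfying $\Psi\circ\kappa(g)=\operatorname{diag}(g)\circ\Psi$ for every $g\in\mathcal D$. In particular, $(\mathcal{T}(\mathrm{OP}),\kappa)$ and $(I^{\mathcal D}\times I^{\mathbb N},\operatorname{diag})$ are isomorphic as topological $\mathcal D$-spaces.
   Context: Let $I=\{0,1\}$. The graded graph $\mathrm{OP}$ (graph of ordered pairs) has vertex sets $\mathrm{OP}_0=I$ and $\mathrm{OP}_{n+1}=\mathrm{OP}_n\times\mathrm{OP}_n$. For each $v=(v_0,v_1)\in\mathrm{OP}_{n+1}$ there is an edge of index $0$ from $v_0$ to $v$ and an edge of index $1$ from $v_1$ to $v$ (two distinct edges if $v_0=v_1$), and there are no other edges. $\mathcal T(\mathrm{OP})$ is the set of infinite paths $x=(v_0,e_0,v_1,e_1,\dots)$ with $v_n\in\mathrm{OP}_n$ and $e_n$ an edge from $v_n$ to $v_{n+1}$, with the topology whose base consists of cylinder sets (paths with a prescribed initial segment). A path is determined by its vertex on floor $N$ together with the indices of its edges below floor $N$. Let $\mathcal D=\bigoplus_{i\ge 0}\mathbb Z/2\mathbb Z$ with generators $g_0,g_1,\dots$, and $\mathcal D_n=\langle g_0,\dots,g_{n-1}\rangle$, $\mathcal D_0=\{0\}$. The canonical action $\kappa$ of $\mathcal D$ on $\mathcal T(\mathrm{OP})$ is defined on generators: $\kappa(g_n)x$ is the path that coincides with $x$ from floor $n+1$ on, whose edge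 from floor $n$ to floor $n+1$ has index different from the corresponding edge of $x$, and whose edges between floors $i$ and $i+1$, $0\le i<n$, have the same indices as those of $x$. $I^{\mathbb N}$ is the set of sequences $\alpha=(\alpha_i)_{i\ge1}$ with coordinatewise addition mod 2; $I^{\mathcal D}$ is the set of configurations $w\colon\mathcal D\to I$; both carry the product topology. Let $\tau\colon\mathcal D\to I^{\mathbb N}$, $\tau(\sum_i\alpha_i g_{i-1})=(\alpha_i)_{i\ge1}$. The action $\operatorname{diag}$ of $\mathcal D$ on $I^{\mathcal D}\times I^{\mathbb N}$ is $\operatorname{diag}(g)(w,\alpha)=(w(\cdot+g),\alpha+\tau(g))$. Define $\Phi$ assigning to each $v\in\mathrm{OP}_n$ a configuration $\Phi[v]\in I^{\mathcal D_n}$: for $v\in\mathrm{OP}_0$, $\Phi[v](0)=v$; for $v=(v_0,v_1)\in\mathrm{OP}_{n+1}$, $\Phi[v](h)=\Phi[v_0](h)$ for $h\in\mathcal D_n$ and $\Phi[v](h)=\Phi[v_1](g_n+h)$ for $h\in\mathcal D_{n+1}\setminus\mathcal D_n$. For a path $x$ with vertices $v_n$ and edges $e_n$, let $A[x]=\alpha$ where $\alpha_n$ is the index of $e_{n-1}$ ($n\ge1$), and let $F[x]\in I^{\mathcal D}$ be given by $F[x](g)=\Phi[v_n](g+\sum_{i=0}^{n-1}\alpha_{i+1}g_i)$ for $g\in\mathcal D_n$, $n\ge1$ (these prescriptions are consistent). Set $\Psi[x]=(F[x],A[x])$. *)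

theory Defs
  imports "HOL-Analysis.Analysis" "HOL-Library.FSet"
begin

text \<open>I = {0,1} is rendered as bool (False = 0, True = 1); addition mod 2 is inequality (xor).\<close>

datatype vtx = OPleaf bool | OPpair vtx vtx

fun OP :: "nat \<Rightarrow> vtx set" where
  "OP 0 = range OPleaf"
| "OP (Suc n) = {OPpair a b | a b. a \<in> OP n \<and> b \<in> OP n}"

text \<open>The source of the edge of index i into a vertex (v0,v1) is v_i.\<close>
fun child :: "bool \<Rightarrow> vtx \<Rightarrow> vtx" where
  "child i (OPpair a b) = (if i then b else a)"
| "child i (OPleaf c) = undefined"

text \<open>A path is a pair (v, e): v n is the vertex on floor n, e n is the index of the edge
  from floor n to floor n+1.\<close>
type_synonym path = "(nat \<Rightarrow> vtx) \<times> (nat \<Rightarrow> bool)"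

definition OPpaths :: "path set" where
  "OPpaths = {(v, e). \<forall>n. v n \<in> OP n \<and> v n = child (e n) (v (Suc n))}"

definition cyl :: "path \<Rightarrow> nat \<Rightarrow> path set" where
  "cyl x n = {y \<in> OPpaths. (\<forall>k\<le>n. fst y k = fst x k) \<and> (\<forall>k<n. snd y k = snd x k)}"

definition OPtop :: "path topology" where
  "OPtop = topology_generated_by {cyl x n | x n. x \<in> OPpaths}"

text \<open>The group D: element sum_{i in S} g_i is represented by the finite set S;
  generator g_n is {|n|}; addition is symmetric difference.\<close>
definition dplus :: "nat fset \<Rightarrow> nat fset \<Rightarrow> nat fset" where
  "dplus g h = (g |-| h) |\<union>| (h |-| g)"

definition Dn :: "nat \<Rightarrow> nat fset set" where
  "Dn n = {g. fset g \<subseteq> {..<n}}"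

text \<open>Path determined by vertex w on floor N and edge indices e below N:
  descend N w e k is the vertex on floor N - k.\<close>
fun descend :: "nat \<Rightarrow> vtx \<Rightarrow> (nat \<Rightarrow> bool) \<Rightarrow> nat \<Rightarrow> vtx" where
  "descend N w e 0 = w"
| "descend N w e (Suc k) = child (e (N - Suc k)) (descend N w e k)"

definition kappa_gen :: "nat \<Rightarrow> path \<Rightarrow> path" where
  "kappa_gen n x = (let v = fst x; e' = (snd x)(n := \<not> snd x n) in
     (\<lambda>m. if n < m then v m else descend (Suc n) (v (Suc n)) e' (Suc n - m), e'))"

definition kappa :: "nat fset \<Rightarrow> path \<Rightarrow> path" where
  "kappa g x = fold kappa_gen (sorted_list_of_set (fset g)) x"

text \<open>I^N: coordinate k of alpha stands for alpha_{k+1}. tau(g) k = alpha_{k+1}.\<close>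
definition tau :: "nat fset \<Rightarrow> nat \<Rightarrow> bool" where
  "tau g k = (k |\<in>| g)"

definition diag :: "nat fset \<Rightarrow> (nat fset \<Rightarrow> bool) \<times> (nat \<Rightarrow> bool) \<Rightarrow> (nat fset \<Rightarrow> bool) \<times> (nat \<Rightarrow> bool)" where
  "diag g p = ((\<lambda>h. fst p (dplus h g)), (\<lambda>k. snd p k \<noteq> tau g k))"

definition target_top :: "((nat fset \<Rightarrow> bool) \<times> (nat \<Rightarrow> bool)) topology" where
  "target_top = prod_topology (product_topology (\<lambda>_. discrete_topology UNIV) UNIV)
                              (product_topology (\<lambda>_. discrete_topology UNIV) UNIV)"

fun Phi :: "nat \<Rightarrow> vtx \<Rightarrow> nat fset \<Rightarrow> bool" where
  "Phi 0 v h = (case v of OPleaf b \<Rightarrow> b | OPpair _ _ \<Rightarrow> undefined)"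
| "Phi (Suc n) v h = (case v of OPpair a b \<Rightarrow>
      (if h \<in> Dn n then Phi n a h else Phi n b (dplus {|n|} h))
    | OPleaf _ \<Rightarrow> undefined)"

definition A :: "path \<Rightarrow> nat \<Rightarrow> bool" where
  "A x = snd x"

definition F :: "path \<Rightarrow> nat fset \<Rightarrow> bool" where
  "F x g = (let n = (LEAST n. 1 \<le> n \<and> g \<in> Dn n) in
     Phi n (fst x n) (dplus g (fset_of_list (filter (snd x) [0..<n]))))"

definition Psi :: "path \<Rightarrow> (nat fset \<Rightarrow> bool) \<times> (nat \<Rightarrow> bool)" where
  "Psi x = (F x, A x)"

end

theory Submission imports Defs begin

lemma fset_dplus: "fset (dplus g h) = (fset g - fset h) \<union> (fset h - fset g)"
  by (auto simp: dplus_def)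

lemma dplus_comm: "dplus g h = dplus h g"
  by (auto simp: dplus_def)

lemma dplus_assoc: "dplus (dplus a b) c = dplus a (dplus b c)"
  by (intro fset_eqI) (auto simp: fset_dplus)

lemma dplus_self[simp]: "dplus g g = {||}"
  by (auto simp: dplus_def)

lemma dplus_empty[simp]: "dplus g {||} = g" "dplus {||} g = g"
  by (auto simp: dplus_def)

lemma dplus_cancel[simp]: "dplus g (dplus g h) = h"
  by (simp flip: dplus_assoc)

lemma dplus_cancel2[simp]: "dplus (dplus h g) g = h"
  by (simp add: dplus_assoc)

lemma Dn_dplus: "g \<in> Dn n \<Longrightarrow> h \<in> Dn n \<Longrightarrow> dplus g h \<in> Dn n"
  by (auto simp: Dn_def fset_dplus)

lemma Dn_mono: "g \<in> Dn m \<Longrightarrow> m \<le> n \<Longrightarrow> g \<in> Dn n"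
  by (auto simp: Dn_def)

lemma Dn_Suc_not: "h \<in> Dn n \<Longrightarrow> dplus {|n|} h \<notin> Dn n"
  by (auto simp: Dn_def fset_dplus)

lemma Dn_Suc_in: "h \<in> Dn n \<Longrightarrow> dplus {|n|} h \<in> Dn (Suc n)"
  by (auto simp: Dn_def fset_dplus)

lemma Dn_Suc_split: "h \<in> Dn (Suc n) \<Longrightarrow> h \<notin> Dn n \<Longrightarrow> dplus {|n|} h \<in> Dn n"
  by (auto simp: Dn_def fset_dplus less_Suc_eq)

lemma Dn_empty[simp]: "{||} \<in> Dn n"
  by (auto simp: Dn_def)

lemma finite_Dn: "finite (Dn n)"
proof -
  have "fset ` Dn n \<subseteq> Pow {..<n}" by (auto simp: Dn_def)
  then have "finite (fset ` Dn n)" by (rule finite_subset) simp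
  moreover have "inj_on fset (Dn n)" by (meson fset_inject inj_onI)
  ultimately show ?thesis using finite_imageD by blast
qed

lemma ex_Dn: "\<exists>N. g \<in> Dn N \<and> n < N"
proof -
  obtain m where m: "\<forall>i\<in>fset g. i < m"
    using finite_nat_set_iff_bounded[of "fset g"] by auto
  show ?thesis
    by (rule exI[of _ "Suc (m + n)"]) (use m in \<open>fastforce simp: Dn_def\<close>)
qed

definition sn :: "nat \<Rightarrow> (nat \<Rightarrow> bool) \<Rightarrow> nat fset" where
  "sn n e = fset_of_list (filter e [0..<n])"

lemma fset_sn: "fset (sn n e) = {i. i < n \<and> e i}"
  by (auto simp: sn_def fset_of_list.rep_eq)

lemma sn_Dn: "sn n e \<in> Dn n"
  by (auto simp: Dn_def fset_sn)

lemma sn_Suc: "sn (Suc n) e = (if e n then dplus {|n|} (sn n e) else sn n e)"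
  by (intro fset_eqI) (auto simp: fset_sn fset_dplus less_Suc_eq)

lemma sn_cong: "(\<And>k. k < n \<Longrightarrow> e k = e' k) \<Longrightarrow> sn n e = sn n e'"
  by (intro fset_eqI) (auto simp: fset_sn)

lemma sn_flip: "n < N \<Longrightarrow> sn N (e(n := \<not> e n)) = dplus {|n|} (sn N e)"
  by (intro fset_eqI) (auto simp: fset_sn fset_dplus)

lemma OP_Suc_E: "v \<in> OP (Suc n) \<Longrightarrow> \<exists>a b. v = OPpair a b \<and> a \<in> OP n \<and> b \<in> OP n"
  by auto

lemma child_OP: "v \<in> OP (Suc n) \<Longrightarrow> child i v \<in> OP n"
  by auto

lemma Phi_inj: "v \<in> OP n \<Longrightarrow> v' \<in> OP n \<Longrightarrow> (\<forall>h\<in>Dn n. Phi n v h = Phi n v' h) \<Longrightarrow> v = v'"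
proof (induction n arbitrary: v v')
  case 0
  have "Phi 0 v {||} = Phi 0 v' {||}" using 0(3) Dn_empty by blast
  then show ?case using 0(1,2) by (auto split: vtx.splits)
next
  case (Suc n)
  from Suc.prems obtain a b a' b' where v: "v = OPpair a b" "a \<in> OP n" "b \<in> OP n"
    and v': "v' = OPpair a' b'" "a' \<in> OP n" "b' \<in> OP n" by auto
  have "a = a'"
  proof (rule Suc.IH[OF v(2) v'(2)], intro ballI)
    fix h assume h: "h \<in> Dn n"
    then have "h \<in> Dn (Suc n)" by (rule Dn_mono) simp
    then show "Phi n a h = Phi n a' h" using Suc.prems(3) h v v' by auto
  qed
  moreover have "b = b'"
  proof (rule Suc.IH[OF v(3) v'(3)], intro ballI)
    fix h assume h: "h \<in> Dn n"
    then have "dplus {|n|} h \<in> Dn (Suc n)" "dplus {|n|} h \<notin> Dn n"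
      using Dn_Suc_in[OF h] Dn_Suc_not[OF h] by auto
    then show "Phi n b h = Phi n b' h" using Suc.prems(3) v v' by force
  qed
  ultimately show ?case using v v' by simp
qed

lemma Phi_surj: "\<exists>v\<in>OP n. \<forall>h\<in>Dn n. Phi n v h = w h"
proof (induction n arbitrary: w)
  case 0
  show ?case
  proof (intro bexI[of _ "OPleaf (w {||})"] ballI)
    fix h assume "h \<in> Dn 0"
    then have "fset h = {}" by (simp add: Dn_def)
    then have "h = {||}" by (metis bot_fset.rep_eq fset_inject)
    then show "Phi 0 (OPleaf (w {||})) h = w h" by simp
  qed simp
next
  case (Suc n)
  obtain a where a: "a \<in> OP n" "\<forall>h\<in>Dn n. Phi n a h = w h" using Suc.IH[of w] by blast
  obtain b where b: "b \<in> OP n" "\<forall>h\<in>Dn n. Phi n b h = w (dplus {|n|} h)" using Suc.IH[of "\<lambda>h. w (dplus {|n|} h)"] by blast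
  show ?case
  proof (intro bexI[of _ "OPpair a b"] ballI)
    fix h assume h: "h \<in> Dn (Suc n)"
    show "Phi (Suc n) (OPpair a b) h = w h"
    proof (cases "h \<in> Dn n")
      case True then show ?thesis using a by simp
    next
      case False
      have "Phi n b (dplus {|n|} h) = w (dplus {|n|} (dplus {|n|} h))"
        using b(2) Dn_Suc_split[OF h False] by blast
      then show ?thesis using False by simp
    qed
  next
    show "OPpair a b \<in> OP (Suc n)" using a b by simp
  qed
qed


lemma path_prop:
  assumes "x \<in> OPpaths" shows "fst x n \<in> OP n \<and> fst x n = child (snd x n) (fst x (Suc n))"
proof -
  obtain v e where x: "x = (v, e)" by (cases x)
  have "\<forall>n. v n \<in> OP n \<and> v n = child (e n) (v (Suc n))"
    using assms unfolding x OPpaths_def by blast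
  then show ?thesis unfolding x fst_conv snd_conv by blast
qed

lemma F_step:
  assumes x: "x \<in> OPpaths" and g: "g \<in> Dn m"
  shows "Phi (Suc m) (fst x (Suc m)) (dplus g (sn (Suc m) (snd x))) = Phi m (fst x m) (dplus g (sn m (snd x)))"
proof -
  have "fst x (Suc m) \<in> OP (Suc m)" using path_prop[OF x, of "Suc m"] by blast
  then obtain a b where ab: "fst x (Suc m) = OPpair a b"
    using OP_Suc_E by blast
  have gs: "dplus g (sn m (snd x)) \<in> Dn m" by (rule Dn_dplus[OF g sn_Dn])
  show ?thesis
  proof (cases "snd x m")
    case True
    have c: "fst x m = b" using path_prop[OF x, of m] ab True by simp
    have eq: "dplus g (sn (Suc m) (snd x)) = dplus {|m|} (dplus g (sn m (snd x)))"
      using True by (simp add: sn_Suc) (metis dplus_assoc dplus_comm)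
    show ?thesis using Dn_Suc_not[OF gs] by (simp add: ab c eq)
  next
    case False
    have c: "fst x m = a" using path_prop[OF x, of m] ab False by simp
    show ?thesis using gs False by (simp add: ab c sn_Suc)
  qed
qed

lemma F_mono:
  assumes x: "x \<in> OPpaths" and g: "g \<in> Dn m" and le: "m \<le> M"
  shows "Phi M (fst x M) (dplus g (sn M (snd x))) = Phi m (fst x m) (dplus g (sn m (snd x)))"
  using le
proof (induction M rule: dec_induct)
  case base
  then show ?case by simp
next
  case (step n)
  have "g \<in> Dn n" using Dn_mono[OF g step(1)] .
  then show ?case using F_step[OF x] step(3) by simp
qed

lemma F_eq:
  assumes x: "x \<in> OPpaths" and g: "g \<in> Dn N"
  shows "F x g = Phi N (fst x N) (dplus g (sn N (snd x)))"
proof -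
  define n0 where "n0 = (LEAST n. 1 \<le> n \<and> g \<in> Dn n)"
  have "1 \<le> Suc N \<and> g \<in> Dn (Suc N)" using Dn_mono[OF g] by simp
  then have n0: "1 \<le> n0 \<and> g \<in> Dn n0" unfolding n0_def by (rule LeastI)
  have Fx: "F x g = Phi n0 (fst x n0) (dplus g (sn n0 (snd x)))"
    unfolding F_def sn_def n0_def Let_def by simp
  show ?thesis
  proof (cases "n0 \<le> N")
    case True
    then show ?thesis using F_mono[OF x _ True] n0 Fx by simp
  next
    case False
    then show ?thesis using F_mono[OF x g, of n0] Fx by simp
  qed
qed

lemma descend_OP: "w \<in> OP N \<Longrightarrow> k \<le> N \<Longrightarrow> descend N w e k \<in> OP (N - k)"
proof (induction k)
  case 0
  then show ?case by simp
next
  case (Suc k)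
  then have "descend N w e k \<in> OP (Suc (N - Suc k))" by (simp add: Suc_diff_Suc)
  then show ?case by (simp add: child_OP)
qed

lemma kappa_gen_snd: "snd (kappa_gen n x) = (snd x)(n := \<not> snd x n)"
  by (simp add: kappa_gen_def Let_def)

lemma kappa_gen_fst: "n < m \<Longrightarrow> fst (kappa_gen n x) m = fst x m"
  by (simp add: kappa_gen_def Let_def)

lemma kappa_gen_paths:
  assumes x: "x \<in> OPpaths"
  shows "kappa_gen n x \<in> OPpaths"
proof -
  define e' where "e' = (snd x)(n := \<not> snd x n)"
  define w where "w = fst x (Suc n)"
  have w: "w \<in> OP (Suc n)" unfolding w_def using path_prop[OF x, of "Suc n"] by blast
  define v' where "v' = (\<lambda>m. if n < m then fst x m else descend (Suc n) w e' (Suc n - m))"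
  have kg: "kappa_gen n x = (v', e')"
    unfolding kappa_gen_def Let_def v'_def e'_def w_def by simp
  have "v' m \<in> OP m \<and> v' m = child (e' m) (v' (Suc m))" for m
  proof (cases "n < m")
    case True
    have v'm: "v' m = fst x m" "v' (Suc m) = fst x (Suc m)" "e' m = snd x m"
      using True by (simp_all add: v'_def e'_def)
    show ?thesis unfolding v'm using path_prop[OF x, of m] by blast
  next
    case False
    have mem: "v' m \<in> OP m" using descend_OP[OF w, of "Suc n - m" e'] False
      by (simp add: v'_def)
    show ?thesis
    proof (cases "m = n")
      case True
      then show ?thesis using mem by (simp add: v'_def w_def)
    next
      case False2: False
      then have mn: "m < n" using False by simp
      have "Suc n - m = Suc (n - m)" using mn by simp
      moreover have "Suc n - Suc (n - m) = m" using mn by simp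
      moreover have "Suc n - Suc m = n - m" by simp
      ultimately show ?thesis using mem mn by (simp add: v'_def)
    qed
  qed
  then show ?thesis unfolding kg OPpaths_def by blast
qed

lemma diag_comp: "diag g (diag h p) = diag (dplus h g) p"
  by (auto simp: diag_def tau_def fset_dplus dplus_assoc dplus_comm[of g h])

lemma diag_empty: "diag {||} p = p"
  by (simp add: diag_def tau_def)

lemma Psi_kappa_gen:
  assumes x: "x \<in> OPpaths"
  shows "Psi (kappa_gen n x) = diag {|n|} (Psi x)"
proof -
  have k: "kappa_gen n x \<in> OPpaths" by (rule kappa_gen_paths[OF x])
  have "F (kappa_gen n x) h = F x (dplus h {|n|})" for h
  proof -
    obtain N where N: "h \<in> Dn N" "n < N" using ex_Dn by blast
    have hn: "dplus h {|n|} \<in> Dn N" using N by (auto simp: Dn_def fset_dplus)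
    have "F (kappa_gen n x) h = Phi N (fst x N) (dplus h (dplus {|n|} (sn N (snd x))))"
      using F_eq[OF k N(1)] N(2) by (simp add: kappa_gen_fst kappa_gen_snd sn_flip)
    also have "\<dots> = F x (dplus h {|n|})"
      using F_eq[OF x hn] by (simp add: dplus_assoc)
    finally show ?thesis .
  qed
  moreover have "A (kappa_gen n x) k = (A x k \<noteq> tau {|n|} k)" for k
    by (auto simp: A_def tau_def kappa_gen_snd)
  ultimately show ?thesis by (simp add: Psi_def diag_def fun_eq_iff)
qed

lemma fold_kappa:
  "distinct xs \<Longrightarrow> x \<in> OPpaths \<Longrightarrow>
   fold kappa_gen xs x \<in> OPpaths \<and> Psi (fold kappa_gen xs x) = diag (fset_of_list xs) (Psi x)"
proof (induction xs arbitrary: x)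
  case Nil
  then show ?case by (simp add: diag_empty)
next
  case (Cons a xs)
  have k: "kappa_gen a x \<in> OPpaths" by (rule kappa_gen_paths[OF Cons.prems(2)])
  have eq: "dplus {|a|} (fset_of_list xs) = fset_of_list (a # xs)"
    using Cons.prems(1) by (intro fset_eqI) (auto simp: fset_dplus fset_of_list.rep_eq)
  show ?case using Cons.IH[OF _ k] Cons.prems
    by (simp add: Psi_kappa_gen diag_comp eq)
qed

lemma kappa_Psi: "x \<in> OPpaths \<Longrightarrow> Psi (kappa g x) = diag g (Psi x)"
proof -
  assume x: "x \<in> OPpaths"
  have "fset_of_list (sorted_list_of_set (fset g)) = g"
    by (intro fset_eqI) (simp add: fset_of_list.rep_eq)
  then show ?thesis using fold_kappa[OF _ x, of "sorted_list_of_set (fset g)"]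
    by (simp add: kappa_def)
qed


lemma Phi_from_F:
  assumes x: "x \<in> OPpaths" and h: "h \<in> Dn N"
  shows "Phi N (fst x N) h = F x (dplus h (sn N (snd x)))"
proof -
  have "dplus h (sn N (snd x)) \<in> Dn N" by (rule Dn_dplus[OF h sn_Dn])
  from F_eq[OF x this] show ?thesis by simp
qed

lemma Psi_inj:
  assumes x: "x \<in> OPpaths" and y: "y \<in> OPpaths" and eq: "Psi x = Psi y"
  shows "x = y"
proof -
  have e: "snd x = snd y" and f: "F x = F y" using eq by (auto simp: Psi_def A_def)
  have "fst x N = fst y N" for N
  proof (rule Phi_inj)
    show "fst x N \<in> OP N" "fst y N \<in> OP N" using path_prop[OF x] path_prop[OF y] by blast+
    show "\<forall>h\<in>Dn N. Phi N (fst x N) h = Phi N (fst y N) h"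
      using Phi_from_F[OF x] Phi_from_F[OF y] e f by simp
  qed
  then show ?thesis using e by (simp add: prod_eq_iff fun_eq_iff)
qed

lemma dplus_swap: "dplus (dplus a h) (dplus a s) = dplus h s"
  by (intro fset_eqI) (auto simp: fset_dplus)

lemma Psi_surj: "\<exists>x\<in>OPpaths. Psi x = p"
proof -
  define w where "w = fst p"
  define \<alpha> where "\<alpha> = snd p"
  define V where "V n = (SOME v. v \<in> OP n \<and> (\<forall>h\<in>Dn n. Phi n v h = w (dplus h (sn n \<alpha>))))" for n
  have V: "V n \<in> OP n \<and> (\<forall>h\<in>Dn n. Phi n (V n) h = w (dplus h (sn n \<alpha>)))" for n
    unfolding V_def by (rule someI_ex) (use Phi_surj[of n "\<lambda>h. w (dplus h (sn n \<alpha>))"] in blast)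
  have step: "V n = child (\<alpha> n) (V (Suc n))" for n
  proof -
    obtain a b where ab: "V (Suc n) = OPpair a b" "a \<in> OP n" "b \<in> OP n"
      using V[of "Suc n"] OP_Suc_E by blast
    have c: "child (\<alpha> n) (V (Suc n)) \<in> OP n" using ab by simp
    have "\<forall>h\<in>Dn n. Phi n (child (\<alpha> n) (V (Suc n))) h = w (dplus h (sn n \<alpha>))"
    proof
      fix h assume h: "h \<in> Dn n"
      show "Phi n (child (\<alpha> n) (V (Suc n))) h = w (dplus h (sn n \<alpha>))"
      proof (cases "\<alpha> n")
        case True
        have h1: "dplus {|n|} h \<in> Dn (Suc n)" "dplus {|n|} h \<notin> Dn n"
          using Dn_Suc_in[OF h] Dn_Suc_not[OF h] by auto
        have "Phi (Suc n) (V (Suc n)) (dplus {|n|} h) = w (dplus (dplus {|n|} h) (sn (Suc n) \<alpha>))"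
          using V[of "Suc n"] h1(1) by blast
        then show ?thesis using True h1(2) by (simp add: ab sn_Suc dplus_swap)
      next
        case False
        have h1: "h \<in> Dn (Suc n)" using Dn_mono[OF h] by simp
        have "Phi (Suc n) (V (Suc n)) h = w (dplus h (sn (Suc n) \<alpha>))"
          using V[of "Suc n"] h1 by blast
        then show ?thesis using False h by (simp add: ab sn_Suc)
      qed
    qed
    then have "child (\<alpha> n) (V (Suc n)) = V n" using V[of n] by (intro Phi_inj[OF c]) auto
    then show ?thesis by simp
  qed
  have xp: "(V, \<alpha>) \<in> OPpaths" unfolding OPpaths_def using V step by blast
  have "F (V, \<alpha>) g = w g" for g
  proof -
    obtain N where N: "g \<in> Dn N" using ex_Dn by blast
    have "dplus g (sn N \<alpha>) \<in> Dn N" by (rule Dn_dplus[OF N sn_Dn])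
    then show ?thesis using F_eq[OF xp N] V[of N] by simp
  qed
  then have "F (V, \<alpha>) = fst p" by (simp add: fun_eq_iff w_def)
  then have "Psi (V, \<alpha>) = p" by (simp add: Psi_def A_def \<alpha>_def)
  with xp show ?thesis by blast
qed


lemma cyl_sub: "cyl x n \<subseteq> OPpaths"
  by (auto simp: cyl_def)

lemma cyl_self: "x \<in> OPpaths \<Longrightarrow> x \<in> cyl x n"
  by (auto simp: cyl_def)

lemma topspace_OPtop: "topspace OPtop = OPpaths"
  unfolding OPtop_def topology_generated_by_topspace
  using cyl_sub cyl_self by blast

lemma open_of_local:
  assumes T: "T \<subseteq> OPpaths" and loc: "\<And>x. x \<in> T \<Longrightarrow> \<exists>N. cyl x N \<subseteq> T"
  shows "openin OPtop T"
proof -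
  let ?C = "{cyl x n | x n. x \<in> OPpaths}"
  have eq: "T = \<Union>{c \<in> ?C. c \<subseteq> T}"
  proof
    show "T \<subseteq> \<Union>{c \<in> ?C. c \<subseteq> T}"
    proof
      fix x assume x: "x \<in> T"
      obtain N where "cyl x N \<subseteq> T" using loc[OF x] by blast
      moreover have "x \<in> OPpaths" using x T by blast
      ultimately show "x \<in> \<Union>{c \<in> ?C. c \<subseteq> T}" using cyl_self by blast
    qed
  qed blast
  have "generate_topology_on ?C (\<Union>{c \<in> ?C. c \<subseteq> T})"
    by (rule generate_topology_on.UN) (auto intro: generate_topology_on.Basis)
  then show ?thesis unfolding OPtop_def openin_topology_generated_by_iff using eq by simp
qed

lemma loc_const_cont:
  assumes "\<And>x. x \<in> OPpaths \<Longrightarrow> \<exists>N. \<forall>y\<in>cyl x N. f y = f x"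
  shows "continuous_map OPtop (discrete_topology UNIV) f"
  unfolding continuous_map_def
proof (intro conjI allI impI)
  fix U :: "'a set"
  show "openin OPtop {x \<in> topspace OPtop. f x \<in> U}"
  proof (rule open_of_local)
    show "{x \<in> topspace OPtop. f x \<in> U} \<subseteq> OPpaths" by (simp add: topspace_OPtop)
    fix x assume x: "x \<in> {x \<in> topspace OPtop. f x \<in> U}"
    then have xp: "x \<in> OPpaths" by (simp add: topspace_OPtop)
    obtain N where N: "\<forall>y\<in>cyl x N. f y = f x" using assms[OF xp] by blast
    show "\<exists>N. cyl x N \<subseteq> {x \<in> topspace OPtop. f x \<in> U}"
      using N x cyl_sub[of x N] by (intro exI[of _ N]) (auto simp: topspace_OPtop)
  qed
qed auto

lemma cyl_F:
  assumes x: "x \<in> OPpaths" and y: "y \<in> cyl x N" and g: "g \<in> Dn N"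
  shows "F y g = F x g"
proof -
  have yp: "y \<in> OPpaths" "fst y N = fst x N" "\<And>k. k < N \<Longrightarrow> snd y k = snd x k"
    using y by (auto simp: cyl_def)
  have "sn N (snd y) = sn N (snd x)" using yp(3) by (rule sn_cong)
  then show ?thesis using F_eq[OF x g] F_eq[OF yp(1) g] yp(2) by simp
qed

lemma Psi_cont: "continuous_map OPtop target_top Psi"
proof -
  have P: "Psi = (\<lambda>x. (F x, A x))" by (simp add: fun_eq_iff Psi_def)
  have "continuous_map OPtop (discrete_topology UNIV) (\<lambda>x. F x g)" for g
  proof (rule loc_const_cont)
    fix x assume x: "x \<in> OPpaths"
    obtain N where "g \<in> Dn N" using ex_Dn by blast
    then show "\<exists>N. \<forall>y\<in>cyl x N. F y g = F x g" using cyl_F[OF x] by blast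
  qed
  moreover have "continuous_map OPtop (discrete_topology UNIV) (\<lambda>x. A x k)" for k
  proof (rule loc_const_cont)
    fix x assume x: "x \<in> OPpaths"
    show "\<exists>N. \<forall>y\<in>cyl x N. A y k = A x k"
      by (rule exI[of _ "Suc k"]) (auto simp: cyl_def A_def)
  qed
  ultimately show ?thesis unfolding target_top_def P continuous_map_paired
    by (simp add: continuous_map_componentwise_UNIV)
qed

lemma agree_down:
  assumes x: "x \<in> OPpaths" and y: "y \<in> OPpaths" and top: "fst y n = fst x n"
    and e: "\<And>k. k < n \<Longrightarrow> snd y k = snd x k"
  shows "k \<le> n \<Longrightarrow> fst y k = fst x k"
proof -
  have key: "j \<le> n \<Longrightarrow> fst y (n - j) = fst x (n - j)" for j
  proof (induction j)
    case 0 then show ?case using top by simp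
  next
    case (Suc j)
    have s: "Suc (n - Suc j) = n - j" using Suc.prems by simp
    have ih: "fst y (n - j) = fst x (n - j)" using Suc.IH Suc.prems by simp
    have "fst y (n - Suc j) = child (snd y (n - Suc j)) (fst y (Suc (n - Suc j)))"
      using path_prop[OF y] by blast
    also have "\<dots> = child (snd y (n - Suc j)) (fst x (n - j))" by (simp only: s ih)
    also have "\<dots> = child (snd x (n - Suc j)) (fst x (n - j))"
      using e[of "n - Suc j"] Suc.prems by simp
    also have "\<dots> = fst x (n - Suc j)"
    proof -
      have "fst x (n - Suc j) = child (snd x (n - Suc j)) (fst x (Suc (n - Suc j)))"
        using path_prop[OF x, of "n - Suc j"] by blast
      then show ?thesis unfolding s by (rule sym)
    qed
    finally show ?case .
  qed
  assume k: "k \<le> n"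
  have "fst y (n - (n - k)) = fst x (n - (n - k))" by (rule key) simp
  then show ?thesis using k by simp
qed

lemma Psi_cyl:
  assumes x: "x \<in> OPpaths"
  shows "Psi ` cyl x n = {w. \<forall>h\<in>Dn n. w h = F x h} \<times> {\<alpha>. \<forall>k<n. \<alpha> k = snd x k}"
proof
  show "Psi ` cyl x n \<subseteq> {w. \<forall>h\<in>Dn n. w h = F x h} \<times> {\<alpha>. \<forall>k<n. \<alpha> k = snd x k}"
    using cyl_F[OF x] by (auto simp: Psi_def A_def cyl_def)
next
  show "{w. \<forall>h\<in>Dn n. w h = F x h} \<times> {\<alpha>. \<forall>k<n. \<alpha> k = snd x k} \<subseteq> Psi ` cyl x n"
  proof
    fix p assume p: "p \<in> {w. \<forall>h\<in>Dn n. w h = F x h} \<times> {\<alpha>. \<forall>k<n. \<alpha> k = snd x k}"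
    obtain y where y: "y \<in> OPpaths" "Psi y = p" using Psi_surj by blast
    have Fy: "F y = fst p" and Ay: "snd y = snd p" using y(2) by (auto simp: Psi_def A_def)
    have e: "\<And>k. k < n \<Longrightarrow> snd y k = snd x k" using p Ay by auto
    have sn_eq: "sn n (snd y) = sn n (snd x)" using e by (rule sn_cong)
    have "fst y n = fst x n"
    proof (rule Phi_inj)
      show "fst y n \<in> OP n" "fst x n \<in> OP n" using path_prop[OF x] path_prop[OF y(1)] by blast+
      show "\<forall>h\<in>Dn n. Phi n (fst y n) h = Phi n (fst x n) h"
      proof
        fix h assume h: "h \<in> Dn n"
        have hs: "dplus h (sn n (snd x)) \<in> Dn n" by (rule Dn_dplus[OF h sn_Dn])
        have "Phi n (fst y n) h = fst p (dplus h (sn n (snd x)))"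
          using Phi_from_F[OF y(1) h] Fy sn_eq by simp
        also have "\<dots> = F x (dplus h (sn n (snd x)))" using p hs by auto
        also have "\<dots> = Phi n (fst x n) h" using Phi_from_F[OF x h] by simp
        finally show "Phi n (fst y n) h = Phi n (fst x n) h" .
      qed
    qed
    then have "y \<in> cyl x n" using agree_down[OF x y(1)] e y(1) by (auto simp: cyl_def)
    then show "p \<in> Psi ` cyl x n" using y(2) by blast
  qed
qed

lemma open_coord:
  "openin (product_topology (\<lambda>_::'a. discrete_topology (UNIV::'b set)) UNIV) {w. w i = c}"
proof -
  have "openin (product_topology (\<lambda>_::'a. discrete_topology (UNIV::'b set)) UNIV)
     {w \<in> topspace (product_topology (\<lambda>_::'a. discrete_topology (UNIV::'b set)) UNIV). w i \<in> {c}}"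
    by (rule openin_continuous_map_preimage[OF continuous_map_product_projection]) auto
  then show ?thesis by simp
qed

lemma open_cyl_image:
  assumes x: "x \<in> OPpaths"
  shows "openin target_top (Psi ` cyl x n)"
proof -
  let ?P = "product_topology (\<lambda>_::nat fset. discrete_topology (UNIV::bool set)) UNIV"
  let ?Q = "product_topology (\<lambda>_::nat. discrete_topology (UNIV::bool set)) UNIV"
  have tP: "topspace ?P = UNIV" and tQ: "topspace ?Q = UNIV" by auto
  have W: "{w. \<forall>h\<in>Dn n. w h = F x h} = (\<Inter>h\<in>Dn n. {w \<in> topspace ?P. w h \<in> {F x h}}) \<inter> topspace ?P"
    by (auto simp: tP)
  have "openin ?P {w. \<forall>h\<in>Dn n. w h = F x h}"
    unfolding W
    by (rule openin_INT[OF finite_Dn])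
       (simp add: open_coord)
  moreover
  have E: "{\<alpha>. \<forall>k<n. \<alpha> k = snd x k} = (\<Inter>k\<in>{..<n}. {w \<in> topspace ?Q. w k \<in> {snd x k}}) \<inter> topspace ?Q"
    by (auto simp: tQ)
  have "openin ?Q {\<alpha>. \<forall>k<n. \<alpha> k = snd x k}"
    unfolding E
    by (rule openin_INT[OF finite_lessThan])
       (simp add: open_coord)
  ultimately show ?thesis
    unfolding Psi_cyl[OF x] target_top_def openin_prod_Times_iff by blast
qed

lemma Psi_open_map: "open_map OPtop target_top Psi"
  unfolding open_map_def
proof (intro allI impI)
  fix U assume "openin OPtop U"
  then have "generate_topology_on {cyl x n | x n. x \<in> OPpaths} U"
    unfolding OPtop_def openin_topology_generated_by_iff .
  then have "U \<subseteq> OPpaths \<and> openin target_top (Psi ` U)"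
  proof (induction rule: generate_topology_on.induct)
    case Empty
    then show ?case by simp
  next
    case (Int a b)
    have "Psi ` (a \<inter> b) = Psi ` a \<inter> Psi ` b"
      using Int.IH by (intro inj_on_image_Int[of _ OPpaths]) (auto intro: inj_onI Psi_inj)
    then show ?case using Int.IH by (auto intro: openin_Int)
  next
    case (UN K)
    then show ?case by (auto simp: image_Union intro: openin_Union)
  next
    case (Basis s)
    then show ?case using cyl_sub open_cyl_image by blast
  qed
  then show "openin target_top (Psi ` U)" by blast
qed

theorem theorem1:
  shows "homeomorphic_map OPtop target_top Psi \<and>
         (\<forall>g. \<forall>x\<in>OPpaths. Psi (kappa g x) = diag g (Psi x))"
proof
  have surj: "Psi ` topspace OPtop = topspace target_top"
    using Psi_surj by (auto simp: topspace_OPtop target_top_def image_iff) (metis Psi_surj)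
  have inj: "inj_on Psi (topspace OPtop)"
    by (auto simp: topspace_OPtop intro: inj_onI Psi_inj)
  show "homeomorphic_map OPtop target_top Psi"
    by (rule bijective_open_imp_homeomorphic_map[OF Psi_cont Psi_open_map surj inj])
  show "\<forall>g. \<forall>x\<in>OPpaths. Psi (kappa g x) = diag g (Psi x)"
    using kappa_Psi by blast
qed

end
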